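(* For every Borel measurable set $E\subset\mathcal{S}_\varepsilon$, $$\mu_{\mathcal{S}_\varepsilon}(E)=\lim_{\tau\to0}\frac{1}{\tau^{k+r-1}}m_{\mathcal{X}_d}(E^{I_\tau}),$$ where $\mu_{\mathcal{S}_\varepsilon}(E):=\sup_{\tau>0}\frac{1}{\tau^{k+r-1}}m_{\mathcal{X}_d}(E^{I_\tau})$.
   Context: Let $k,r\ge1$, positive integers $m_1,\dots,m_k,n_1,\dots,n_r$, $d=\sum m_i+\sum n_j$, with fixed norms $\|\cdot\|$ on each $\mathbb{R}^{m_i},\mathbb{R}^{n_j}$; $\mathbb{S}^l$ is the unit sphere on $\mathbb{R}^l$. $\mathcal{X}_d$ is the space of unimodular lattices in $\mathbb{R}^d$ with invariant probability measure $m_{\mathcal{X}_d}$. $L_\varepsilon=\{(x,y)\in(\mathbb{S}^{m_1}\times\cdots\times\mathbb{S}^{m_k}\times\mathbb{S}^{n_1}\times\cdots\times\mathbb{S}^{n_{r-1}})\times\mathbb{R}^{n_r}:\|y\|^{n_r}\le\varepsilon\}$; $\mathcal{S}_\varepsilon$ is the set of $\Lambda\in\mathcal{X}_d$ having a primitive vector in $L_\varepsilon$. $a_t=\mathrm{diag}\big(e^{t_1}I_{m_1},\dots,e^{t_k}I_{m_k},e^{-t_{k+1}}I_{n_1},\dots,e^{-t_{k+r-1}}I_{n_{r-1}},e^{(\sum_{i=1}^{r-1}n_it_{k+i}-\sum_{i=1}^km_it_i)/n_r}I_{n_r}\big)$ for $t\in\mathbb{R}^{k+r-1}$; $E^I=\{a_tx:t\in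 I,x\in E\}$; $I_\tau=[0,\tau]^{k+r-1}$. *)

theory Defs
  imports "HOL-Analysis.Analysis" "HOL-Probability.Probability"
begin

text \<open>The block structure
  R^d = R^{m_1} x ... x R^{m_k} x R^{n_1} x ... x R^{n_r} is encoded by a map
  blk :: 'd => nat: block b < k is the b-th m-block, block k + j (j < r) is the
  (j+1)-th n-block. Blocks are numbered from 0.\<close>

definition blockproj :: "('d::finite \<Rightarrow> nat) \<Rightarrow> nat \<Rightarrow> real^'d \<Rightarrow> real^'d" where
  "blockproj blk b x = (\<chi> i. if blk i = b then x $ i else 0)"

definition blocksize :: "('d::finite \<Rightarrow> nat) \<Rightarrow> nat \<Rightarrow> nat" where
  "blocksize blk b = card {i. blk i = b}"

definition is_block_norm :: "('d::finite \<Rightarrow> nat) \<Rightarrow> nat \<Rightarrow> (real^'d \<Rightarrow> real) \<Rightarrow> bool" where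
  "is_block_norm blk b N \<longleftrightarrow>
     (\<forall>x. N x = N (blockproj blk b x)) \<and>
     (\<forall>x. N x = 0 \<longleftrightarrow> blockproj blk b x = 0) \<and>
     (\<forall>c x. N (c *\<^sub>R x) = \<bar>c\<bar> * N x) \<and>
     (\<forall>x y. N (x + y) \<le> N x + N y)"

definition intvecs :: "(real^'d::finite) set" where
  "intvecs = {z. \<forall>i. z $ i \<in> \<int>}"

definition unimod_mats :: "(real^'d^'d::finite) set" where
  "unimod_mats = {g. \<bar>det g\<bar> = 1}"

definition lat_of :: "real^'d^'d \<Rightarrow> (real^'d::finite) set" where
  "lat_of g = (\<lambda>z. g *v z) ` intvecs"

definition Xd :: "(real^'d::finite) set set" where
  "Xd = lat_of ` unimod_mats"

definition Xd_top :: "(real^'d::finite) set topology" where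
  "Xd_top = topology (\<lambda>U. U \<subseteq> Xd \<and>
      openin (top_of_set unimod_mats) {g \<in> unimod_mats. lat_of g \<in> U})"

definition Xd_borel :: "(real^'d::finite) set measure" where
  "Xd_borel = sigma Xd {U. openin Xd_top U}"

definition lat_act :: "real^'d^'d \<Rightarrow> (real^'d::finite) set \<Rightarrow> (real^'d) set" where
  "lat_act g L = (\<lambda>v. g *v v) ` L"

definition is_Haar_Xd :: "(real^'d::finite) set measure \<Rightarrow> bool" where
  "is_Haar_Xd m \<longleftrightarrow> prob_space m \<and> space m = Xd \<and> sets m = sets Xd_borel \<and>
     (\<forall>g A. det g = 1 \<longrightarrow> A \<in> sets m \<longrightarrow>
        emeasure m {L \<in> Xd. lat_act g L \<in> A} = emeasure m A)"

definition primitive_in :: "(real^'d::finite) set \<Rightarrow> real^'d \<Rightarrow> bool" where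
  "primitive_in L v \<longleftrightarrow> v \<in> L \<and> v \<noteq> 0 \<and>
     (\<forall>w\<in>L. \<forall>j::int. v = of_int j *\<^sub>R w \<longrightarrow> \<bar>j\<bar> = 1)"

definition Leps :: "nat \<Rightarrow> nat \<Rightarrow> ('d::finite \<Rightarrow> nat) \<Rightarrow> (nat \<Rightarrow> real^'d \<Rightarrow> real)
                     \<Rightarrow> real \<Rightarrow> (real^'d) set" where
  "Leps k r blk N \<epsilon> = {v. (\<forall>b < k + r - 1. N b v = 1) \<and>
       N (k + r - 1) v ^ blocksize blk (k + r - 1) \<le> \<epsilon>}"

definition Seps :: "nat \<Rightarrow> nat \<Rightarrow> ('d::finite \<Rightarrow> nat) \<Rightarrow> (nat \<Rightarrow> real^'d \<Rightarrow> real)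
                     \<Rightarrow> real \<Rightarrow> (real^'d) set set" where
  "Seps k r blk N \<epsilon> = {L \<in> Xd. \<exists>v. primitive_in L v \<and> v \<in> Leps k r blk N \<epsilon>}"

text \<open>t in R^{k+r-1} is t :: nat => real, coordinates 0..k+r-2 (paper's t_1..t_{k+r-1}).\<close>
definition aexp :: "nat \<Rightarrow> nat \<Rightarrow> ('d::finite \<Rightarrow> nat) \<Rightarrow> (nat \<Rightarrow> real) \<Rightarrow> nat \<Rightarrow> real" where
  "aexp k r blk t b =
     (if b < k then t b
      else if b < k + r - 1 then - t b
      else ((\<Sum>c\<in>{k..<k+r-1}. real (blocksize blk c) * t c)
            - (\<Sum>c<k. real (blocksize blk c) * t c)) / real (blocksize blk (k + r - 1)))"

definition amat :: "nat \<Rightarrow> nat \<Rightarrow> ('d::finite \<Rightarrow> nat) \<Rightarrow> (nat \<Rightarrow> real) \<Rightarrow> real^'d^'d" where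
  "amat k r blk t = (\<chi> i j. if i = j then exp (aexp k r blk t (blk i)) else 0)"

definition Itau :: "nat \<Rightarrow> nat \<Rightarrow> real \<Rightarrow> (nat \<Rightarrow> real) set" where
  "Itau k r \<tau> = {t. (\<forall>j < k + r - 1. 0 \<le> t j \<and> t j \<le> \<tau>) \<and> (\<forall>j \<ge> k + r - 1. t j = 0)}"

definition flowset :: "nat \<Rightarrow> nat \<Rightarrow> ('d::finite \<Rightarrow> nat) \<Rightarrow> (nat \<Rightarrow> real) set
                        \<Rightarrow> (real^'d) set set \<Rightarrow> (real^'d) set set" where
  "flowset k r blk I E = {lat_act (amat k r blk t) L | t L. t \<in> I \<and> L \<in> E}"

definition muS :: "(real^'d::finite) set measure \<Rightarrow> nat \<Rightarrow> nat \<Rightarrow> ('d \<Rightarrow> nat)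
                    \<Rightarrow> (real^'d) set set \<Rightarrow> ennreal" where
  "muS m k r blk E = (SUP \<tau>\<in>{0<..}. emeasure (completion m) (flowset k r blk (Itau k r \<tau>) E)
                                        / ennreal (\<tau> ^ (k + r - 1)))"

end

theory Submission
  imports Defs
begin
lemma aexp_add: "aexp k r blk (\<lambda>j. s j + t j) b = aexp k r blk s b + aexp k r blk t b"
  unfolding aexp_def by (simp add: distrib_left sum.distrib add_divide_distrib diff_divide_distrib)

lemma aexp_zero: "aexp k r blk (\<lambda>j. 0) b = 0"
  unfolding aexp_def by simp

lemma aexp_uminus: "aexp k r blk (\<lambda>j. - t j) b = - aexp k r blk t b"
  unfolding aexp_def by (simp add: sum_negf minus_divide_left)

lemma amat_mult_mat: "amat k r blk t ** g = (\<chi> i j. exp (aexp k r blk t (blk i)) * g $ i $ j)"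
proof -
  have "(\<Sum>l\<in>UNIV. (if i = l then exp (aexp k r blk t (blk i)) else 0) * g $ l $ j)
      = exp (aexp k r blk t (blk i)) * g $ i $ j" for i j
    by (subst sum.cong[OF refl, where h="\<lambda>l. if i = l then exp (aexp k r blk t (blk i)) * g $ l $ j else 0"]) auto
  then show ?thesis by (simp add: matrix_matrix_mult_def amat_def)
qed

lemma amat_mult_vec: "amat k r blk t *v v = (\<chi> i. exp (aexp k r blk t (blk i)) * v $ i)"
proof -
  have "(\<Sum>l\<in>UNIV. (if i = l then exp (aexp k r blk t (blk i)) else 0) * v $ l)
      = exp (aexp k r blk t (blk i)) * v $ i" for i
    by (subst sum.cong[OF refl, where h="\<lambda>l. if i = l then exp (aexp k r blk t (blk i)) * v $ l else 0"]) auto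
  then show ?thesis by (simp add: matrix_vector_mult_def amat_def)
qed

lemma amat_mult: "amat k r blk s ** amat k r blk t = amat k r blk (\<lambda>j. s j + t j)"
proof -
  have "exp (aexp k r blk s b) * exp (aexp k r blk t b) = exp (aexp k r blk (\<lambda>j. s j + t j) b)" for b
    by (simp add: aexp_add[of k r blk s t b] exp_add)
  then show ?thesis by (simp add: amat_mult_mat vec_eq_iff) (simp add: amat_def)
qed

lemma amat_zero: "amat k r blk (\<lambda>j. 0) = mat 1"
  by (simp add: amat_def aexp_zero mat_def vec_eq_iff)

lemma amat_inv: "amat k r blk (\<lambda>j. - t j) ** amat k r blk t = mat 1"
  "amat k r blk t ** amat k r blk (\<lambda>j. - t j) = mat 1"
  by (simp_all add: amat_mult amat_zero)

lemma det_amat: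
  fixes blk :: "'d::finite \<Rightarrow> nat"
  assumes r: "r \<ge> 1" and blk: "\<forall>i. blk i < k + r"
    and pos: "blocksize blk (k + r - 1) > 0"
  shows "det (amat k r blk t) = 1"
proof -
  let ?s = "\<lambda>b. real (blocksize blk b)"
  let ?a = "aexp k r blk t"
  have "det (amat k r blk t) = (\<Prod>i\<in>UNIV. exp (?a (blk i)))"
    by (subst det_diagonal) (auto simp: amat_def)
  also have "\<dots> = exp (\<Sum>i\<in>UNIV. ?a (blk i))" by (simp add: exp_sum)
  also have "(\<Sum>i\<in>UNIV. ?a (blk i)) = (\<Sum>b\<in>{..<k+r}. \<Sum>i\<in>{i\<in>UNIV. blk i = b}. ?a (blk i))"
    by (rule sum.group[symmetric]) (use blk in auto)
  also have "\<dots> = (\<Sum>b\<in>{..<k+r}. ?s b * ?a b)"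
    by (rule sum.cong) (auto simp: blocksize_def)
  also have "\<dots> = 0"
  proof -
    define D where "D = k + r - 1"
    have kr: "k + r = Suc D" "k \<le> D" using r by (auto simp: D_def)
    have "(\<Sum>b\<in>{..<k+r}. ?s b * ?a b) = (\<Sum>b\<in>{0..<D}. ?s b * ?a b) + ?s D * ?a D"
      by (simp add: kr lessThan_atLeast0)
    also have "(\<Sum>b\<in>{0..<D}. ?s b * ?a b) = (\<Sum>b\<in>{0..<k}. ?s b * ?a b) + (\<Sum>b\<in>{k..<D}. ?s b * ?a b)"
      by (rule sum.atLeastLessThan_concat[symmetric]) (use kr in auto)
    also have "(\<Sum>b\<in>{0..<k}. ?s b * ?a b) = (\<Sum>b\<in>{0..<k}. ?s b * t b)"
      by (rule sum.cong) (auto simp: aexp_def)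
    also have "(\<Sum>b\<in>{k..<D}. ?s b * ?a b) = - (\<Sum>b\<in>{k..<D}. ?s b * t b)"
      by (subst sum_negf[symmetric], rule sum.cong) (auto simp: aexp_def D_def)
    also have "?s D * ?a D = (\<Sum>b\<in>{k..<D}. ?s b * t b) - (\<Sum>b\<in>{0..<k}. ?s b * t b)"
      using pos r by (simp add: aexp_def D_def lessThan_atLeast0)
    finally show ?thesis by simp
  qed
  finally show ?thesis by simp
qed

lemma lat_act_lat_of: "lat_act g (lat_of h) = lat_of (g ** h)"
  by (auto simp: lat_act_def lat_of_def image_image matrix_vector_mul_assoc)

lemma lat_act_lat_act: "lat_act a (lat_act b L) = lat_act (a ** b) L"
  by (auto simp: lat_act_def image_image matrix_vector_mul_assoc)

lemma lat_act_one: "lat_act (mat 1) L = L"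
  by (simp add: lat_act_def)

lemma unimod_mult: "det a = 1 \<Longrightarrow> g \<in> unimod_mats \<Longrightarrow> a ** g \<in> unimod_mats"
  by (simp add: unimod_mats_def det_mul)

lemma Xd_act: "det a = 1 \<Longrightarrow> L \<in> Xd \<Longrightarrow> lat_act a L \<in> Xd"
  by (auto simp: Xd_def lat_act_lat_of unimod_mult)

lemma blockproj_amat: "blockproj blk b (amat k r blk t *v v) = exp (aexp k r blk t b) *\<^sub>R blockproj blk b v"
  by (simp add: blockproj_def amat_mult_vec vec_eq_iff)

lemma block_norm_amat:
  assumes "is_block_norm blk b N"
  shows "N (amat k r blk t *v v) = exp (aexp k r blk t b) * N v"
proof -
  have "N (amat k r blk t *v v) = N (blockproj blk b (amat k r blk t *v v))"
    using assms unfolding is_block_norm_def by blast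
  also have "\<dots> = exp (aexp k r blk t b) * N (blockproj blk b v)"
    using assms unfolding is_block_norm_def by (simp add: blockproj_amat)
  also have "N (blockproj blk b v) = N v"
    using assms unfolding is_block_norm_def by metis
  finally show ?thesis .
qed

lemma block_norm_nonneg:
  assumes "is_block_norm blk b N" shows "N x \<ge> 0"
proof -
  have h: "\<forall>c x. N (c *\<^sub>R x) = \<bar>c\<bar> * N x" "\<forall>x y. N (x + y) \<le> N x + N y"
    using assms unfolding is_block_norm_def by auto
  have "N 0 = 0" using h(1)[rule_format, of 0 x] by simp
  moreover have "N (x + (-1) *\<^sub>R x) \<le> N x + N ((-1) *\<^sub>R x)" using h(2) by blast
  moreover have "N ((-1) *\<^sub>R x) = N x" using h(1)[rule_format, of "-1" x] by simp
  ultimately show ?thesis by simp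
qed

lemma block_norm_cont:
  assumes "is_block_norm blk b N" shows "continuous_on UNIV N"
proof (rule convex_on_continuous)
  have h: "\<forall>c x. N (c *\<^sub>R x) = \<bar>c\<bar> * N x" "\<forall>x y. N (x + y) \<le> N x + N y"
    using assms unfolding is_block_norm_def by auto
  show "convex_on UNIV N"
  proof (rule convex_onI)
    fix t :: real and x y :: "real^'a" assume t: "0 < t" "t < 1"
    have "N ((1 - t) *\<^sub>R x + t *\<^sub>R y) \<le> N ((1 - t) *\<^sub>R x) + N (t *\<^sub>R y)" using h(2) by blast
    also have "\<dots> = (1 - t) * N x + t * N y" using h(1) t by simp
    finally show "N ((1 - t) *\<^sub>R x + t *\<^sub>R y) \<le> (1 - t) * N x + t * N y" .
  qed simp
qed simp

lemma cont_matvec: "continuous_on S (\<lambda>g::real^'n^'m. g *v z)"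
  unfolding matrix_vector_mult_def by (intro continuous_on_vec_lambda continuous_intros)

lemma cont_matmul_right: "continuous_on S (\<lambda>h::real^'n^'m. h ** (c::real^'p^'n))"
  unfolding matrix_matrix_mult_def by (intro continuous_on_vec_lambda continuous_intros)

lemma cont_matmul_left: "continuous_on S (\<lambda>h::real^'p^'n. (c::real^'n^'m) ** h)"
  unfolding matrix_matrix_mult_def by (intro continuous_on_vec_lambda continuous_intros)

lemma cont_det: "continuous_on S (det :: real^'n^'n \<Rightarrow> real)"
  unfolding det_def by (intro continuous_intros)
lemma closed_unimod: "closed (unimod_mats :: (real^'n^'n) set)"
proof -
  have "closed ((\<lambda>g::real^'n^'n. \<bar>det g\<bar>) -` {1})"
    by (rule continuous_closed_vimage) (auto intro!: continuous_intros continuous_on_imp_continuous_within[OF cont_det])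
  moreover have "unimod_mats = (\<lambda>g::real^'n^'n. \<bar>det g\<bar>) -` {1}" by (auto simp: unimod_mats_def)
  ultimately show ?thesis by simp
qed

lemma borel_unimod: "unimod_mats \<in> sets (borel :: (real^'n^'n) measure)"
  using closed_unimod by (rule borel_closed)

definition XdP :: "(real^'d::finite) set set \<Rightarrow> bool" where
  "XdP U \<longleftrightarrow> U \<subseteq> Xd \<and> openin (top_of_set unimod_mats) {g \<in> unimod_mats. lat_of g \<in> U}"

lemma istop_XdP: "istopology (XdP :: (real^'d::finite) set set \<Rightarrow> bool)"
  unfolding istopology_def
proof (intro conjI allI impI)
  fix S T :: "(real^'d) set set" assume S: "XdP S" and T: "XdP T"
  have o1: "openin (top_of_set unimod_mats) {g \<in> unimod_mats. lat_of g \<in> S}" and s1: "S \<subseteq> Xd"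
    using S unfolding XdP_def by simp_all
  have o2: "openin (top_of_set unimod_mats) {g \<in> unimod_mats. lat_of g \<in> T}"
    using T unfolding XdP_def by simp
  have eq: "{g \<in> unimod_mats. lat_of g \<in> S \<inter> T} = {g \<in> unimod_mats. lat_of g \<in> S} \<inter> {g \<in> unimod_mats. lat_of g \<in> T}" by blast
  have "openin (top_of_set unimod_mats) {g \<in> unimod_mats. lat_of g \<in> S \<inter> T}"
    unfolding eq by (rule openin_Int[OF o1 o2])
  moreover have "S \<inter> T \<subseteq> Xd" using s1 by blast
  ultimately show "XdP (S \<inter> T)" unfolding XdP_def by simp
next
  fix K :: "(real^'d) set set set" assume K: "\<forall>S\<in>K. XdP S"
  have "openin (top_of_set unimod_mats) (\<Union>S\<in>K. {g \<in> unimod_mats. lat_of g \<in> S})"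
    by (rule openin_Union) (use K in \<open>auto simp: XdP_def\<close>)
  moreover have "(\<Union>S\<in>K. {g \<in> unimod_mats. lat_of g \<in> S}) = {g \<in> unimod_mats. lat_of g \<in> \<Union>K}" by blast
  moreover have "\<Union>K \<subseteq> Xd" using K unfolding XdP_def by blast
  ultimately show "XdP (\<Union>K)" unfolding XdP_def by simp
qed

lemma Xd_top_open:
  fixes U :: "(real^'d::finite) set set"
  shows "openin Xd_top U \<longleftrightarrow> U \<subseteq> Xd \<and> openin (top_of_set unimod_mats) {g \<in> unimod_mats. lat_of g \<in> U}"
proof -
  have "(Xd_top :: (real^'d) set topology) = topology XdP" unfolding Xd_top_def XdP_def by simp
  then have "openin (Xd_top :: (real^'d) set topology) = openin (topology XdP)" by (rule arg_cong)
  also have "\<dots> = XdP" by (rule topology_inverse'[OF istop_XdP])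
  finally have "openin (Xd_top :: (real^'d) set topology) = XdP" .
  then show ?thesis by (simp add: XdP_def)
qed

lemma lat_of_Xd: "g \<in> unimod_mats \<Longrightarrow> lat_of g \<in> Xd"
  by (simp add: Xd_def)

lemma sets_Xd_borel: "sets Xd_borel = sigma_sets Xd {U. openin Xd_top U}"
  unfolding Xd_borel_def by (rule sets_measure_of) (auto simp: Xd_top_open)

lemma space_Xd_borel: "space Xd_borel = Xd"
  unfolding Xd_borel_def by (rule space_measure_of) (auto simp: Xd_top_open)

lemma open_in_Xd_borel: "openin Xd_top U \<Longrightarrow> U \<in> sets Xd_borel"
  by (simp add: sets_Xd_borel)

lemma pre_borel:
  assumes "E \<in> sets Xd_borel"
  shows "{g \<in> unimod_mats. lat_of g \<in> E} \<in> sets borel"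
proof -
  have "E \<in> sigma_sets Xd {U. openin Xd_top U}" using assms by (simp add: sets_Xd_borel)
  then show ?thesis
  proof induct
    case (Basic a)
    then have "openin (top_of_set unimod_mats) {g \<in> unimod_mats. lat_of g \<in> a}"
      by (simp add: Xd_top_open)
    then obtain W where W: "open W" and eq: "{g \<in> unimod_mats. lat_of g \<in> a} = unimod_mats \<inter> W"
      by (auto simp: openin_open)
    show ?case unfolding eq by (rule sets.Int[OF borel_unimod borel_open[OF W]])
  next
    case Empty then show ?case by simp
  next
    case (Compl a)
    have eq: "{g \<in> unimod_mats. lat_of g \<in> Xd - a} = unimod_mats - {g \<in> unimod_mats. lat_of g \<in> a}"
      using lat_of_Xd by blast
    show ?case unfolding eq by (rule sets.Diff[OF borel_unimod Compl(2)])
  next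
    case (Union a)
    have eq: "{g \<in> unimod_mats. lat_of g \<in> \<Union> (range a)} = (\<Union>i. {g \<in> unimod_mats. lat_of g \<in> a i})" by blast
    have "(\<Union>i. {g \<in> unimod_mats. lat_of g \<in> a i}) \<in> sets borel"
      by (rule sets.countable_UN) (use Union(2) in blast)
    then show ?case unfolding eq .
  qed
qed

lemma lat_act_measurable:
  fixes a :: "real^'d^'d::finite"
  assumes "det a = 1"
  shows "lat_act a \<in> Xd_borel \<rightarrow>\<^sub>M Xd_borel"
proof (rule measurable_sigma_sets[OF sets_Xd_borel])
  show "{U. openin Xd_top U} \<subseteq> Pow Xd" by (auto simp: Xd_top_open)
  show "lat_act a \<in> space Xd_borel \<rightarrow> Xd" using Xd_act[OF assms] by (auto simp: space_Xd_borel)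
  fix U :: "(real^'d) set set" assume "U \<in> {U. openin Xd_top U}"
  then have U: "openin (top_of_set unimod_mats) {g \<in> unimod_mats. lat_of g \<in> U}"
    by (simp add: Xd_top_open)
  have "openin (top_of_set unimod_mats) (unimod_mats \<inter> (\<lambda>g. a ** g) -` {g \<in> unimod_mats. lat_of g \<in> U})"
    by (rule continuous_openin_preimage[OF cont_matmul_left _ U]) (simp add: Pi_iff unimod_mult[OF assms])
  moreover have "unimod_mats \<inter> (\<lambda>g. a ** g) -` {g \<in> unimod_mats. lat_of g \<in> U}
      = {g \<in> unimod_mats. lat_of g \<in> lat_act a -` U \<inter> space Xd_borel}"
    by (auto simp: space_Xd_borel lat_act_lat_of lat_of_Xd unimod_mult[OF assms])
  ultimately have "openin Xd_top (lat_act a -` U \<inter> space Xd_borel)"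
    by (simp add: Xd_top_open space_Xd_borel)
  then show "lat_act a -` U \<inter> space Xd_borel \<in> sets Xd_borel" by (rule open_in_Xd_borel)
qed

lemma col_entry: "(g *v axis j 1) $ i = (g $ i $ j :: real)"
proof -
  have "(\<Sum>l\<in>UNIV. g $ i $ l * (if l = j then 1 else 0)) = (\<Sum>l\<in>UNIV. if l = j then g $ i $ l else (0::real))"
    by (rule sum.cong) auto
  then show ?thesis by (simp add: matrix_vector_mult_def axis_def)
qed

lemma axis_intvec: "axis j 1 \<in> intvecs"
  by (simp add: intvecs_def axis_def)

lemma intvec_diff: "z \<in> intvecs \<Longrightarrow> w \<in> intvecs \<Longrightarrow> z - w \<in> intvecs"
  by (simp add: intvecs_def Ints_diff)

lemma int_mat_vec: "(\<forall>i j. c $ i $ j \<in> \<int>) \<Longrightarrow> z \<in> intvecs \<Longrightarrow> c *v z \<in> intvecs"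
  unfolding intvecs_def matrix_vector_mult_def by (auto intro!: Ints_sum Ints_mult)

lemma lat_eq_gamma:
  fixes g h :: "real^'d^'d::finite"
  assumes "lat_of g = lat_of h"
  shows "\<exists>c. (\<forall>i j. c $ i $ j \<in> \<int>) \<and> g = h ** c"
proof -
  have "\<forall>j. \<exists>w. w \<in> intvecs \<and> g *v axis j 1 = h *v w"
  proof
    fix j
    have "g *v axis j 1 \<in> lat_of g" unfolding lat_of_def using axis_intvec by blast
    then have "g *v axis j 1 \<in> lat_of h" using assms by simp
    then show "\<exists>w. w \<in> intvecs \<and> g *v axis j 1 = h *v w" unfolding lat_of_def by blast
  qed
  then obtain w where w: "\<And>j. w j \<in> intvecs" "\<And>j. g *v axis j 1 = h *v w j" by metis
  define c where "c = (\<chi> i j. w j $ i)"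
  have "(\<forall>i j. c $ i $ j \<in> \<int>)" using w(1) by (simp add: c_def intvecs_def)
  moreover have "g = h ** c"
  proof -
    have "(h ** c) $ i $ j = g $ i $ j" for i j
    proof -
      have "(h ** c) $ i $ j = (h *v w j) $ i"
        by (simp add: matrix_matrix_mult_def matrix_vector_mult_def c_def)
      also have "\<dots> = g $ i $ j" using w(2)[of j, symmetric] by (simp add: col_entry)
      finally show ?thesis .
    qed
    then show ?thesis by (simp add: vec_eq_iff)
  qed
  ultimately show ?thesis by blast
qed

lemma lat_of_mult_int:
  fixes h c c' :: "real^'d^'d::finite"
  assumes "\<forall>i j. c $ i $ j \<in> \<int>" "\<forall>i j. c' $ i $ j \<in> \<int>" "c ** c' = mat 1"
  shows "lat_of (h ** c) = lat_of h"
proof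
  show "lat_of (h ** c) \<subseteq> lat_of h"
  proof
    fix v assume "v \<in> lat_of (h ** c)"
    then obtain z where z: "z \<in> intvecs" "v = (h ** c) *v z" by (auto simp: lat_of_def)
    then have "v = h *v (c *v z)" by (simp add: matrix_vector_mul_assoc)
    moreover have "c *v z \<in> intvecs" using int_mat_vec[OF assms(1) z(1)] .
    ultimately show "v \<in> lat_of h" by (auto simp: lat_of_def)
  qed
next
  show "lat_of h \<subseteq> lat_of (h ** c)"
  proof
    fix v assume "v \<in> lat_of h"
    then obtain y where y: "y \<in> intvecs" "v = h *v y" by (auto simp: lat_of_def)
    have "(h ** c) *v (c' *v y) = h *v ((c ** c') *v y)" by (simp add: matrix_vector_mul_assoc matrix_mul_assoc)
    also have "\<dots> = v" using assms(3) y(2) by simp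
    finally have "v = (h ** c) *v (c' *v y)" by simp
    moreover have "c' *v y \<in> intvecs" using int_mat_vec[OF assms(2) y(1)] .
    ultimately show "v \<in> lat_of (h ** c)" by (auto simp: lat_of_def)
  qed
qed

lemma unimod_inv:
  fixes h :: "real^'d^'d::finite"
  assumes "h \<in> unimod_mats"
  obtains hi where "hi ** h = mat 1" "h ** hi = mat 1"
proof -
  have "det h \<noteq> 0" using assms by (auto simp: unimod_mats_def)
  then have "invertible h" by (simp add: invertible_det_nz)
  then show ?thesis using that unfolding invertible_def by blast
qed

lemma pi_open:
  fixes W :: "(real^'d^'d::finite) set"
  assumes W: "openin (top_of_set unimod_mats) W"
  shows "openin Xd_top (lat_of ` W)"
proof -
  have WG: "W \<subseteq> unimod_mats" using openin_imp_subset[OF W] by simp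
  have "openin (top_of_set unimod_mats) {h \<in> unimod_mats. lat_of h \<in> lat_of ` W}"
  proof (subst openin_subopen, intro ballI)
    fix h assume "h \<in> {h \<in> unimod_mats. lat_of h \<in> lat_of ` W}"
    then obtain g where h: "h \<in> unimod_mats" and g: "g \<in> W" and eq: "lat_of h = lat_of g" by blast
    have gG: "g \<in> unimod_mats" using g WG by blast
    obtain c where c: "\<forall>i j. c $ i $ j \<in> \<int>" "g = h ** c" using lat_eq_gamma[OF eq[symmetric]] by blast
    obtain c' where c': "\<forall>i j. c' $ i $ j \<in> \<int>" "h = g ** c'" using lat_eq_gamma[OF eq] by blast
    obtain hi where hi: "hi ** h = mat 1" using unimod_inv[OF h] by blast
    have "c ** c' = mat 1"
    proof -
      have "h ** (c ** c') = h" using c(2) c'(2) by (metis matrix_mul_assoc)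
      then have "hi ** (h ** (c ** c')) = hi ** h" by simp
      then show ?thesis using hi by (metis matrix_mul_assoc matrix_mul_lid)
    qed
    have detc: "\<bar>det c\<bar> = 1" using h gG c(2) by (auto simp: unimod_mats_def det_mul abs_mult)
    define T where "T = unimod_mats \<inter> (\<lambda>h'. h' ** c) -` W"
    have "openin (top_of_set unimod_mats) T" unfolding T_def
      by (rule continuous_openin_preimage[OF cont_matmul_right _ W])
        (simp add: Pi_iff unimod_mats_def det_mul abs_mult detc)
    moreover have "h \<in> T" using h g c(2) by (simp add: T_def)
    moreover have "T \<subseteq> {h \<in> unimod_mats. lat_of h \<in> lat_of ` W}"
    proof
      fix h' assume "h' \<in> T"
      then have "h' \<in> unimod_mats" "h' ** c \<in> W" by (auto simp: T_def)
      moreover have "lat_of (h' ** c) = lat_of h'" by (rule lat_of_mult_int[OF c(1) c'(1) \<open>c ** c' = mat 1\<close>])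
      ultimately show "h' \<in> {h \<in> unimod_mats. lat_of h \<in> lat_of ` W}" by (metis (mono_tags, lifting) image_eqI mem_Collect_eq)
    qed
    ultimately show "\<exists>T. openin (top_of_set unimod_mats) T \<and> h \<in> T \<and> T \<subseteq> {h \<in> unimod_mats. lat_of h \<in> lat_of ` W}"
      by blast
  qed
  moreover have "lat_of ` W \<subseteq> Xd" using WG lat_of_Xd by blast
  ultimately show ?thesis by (simp add: Xd_top_open)
qed

lemma matvec_bound:
  fixes A :: "real^'n^'m"
  shows "norm (A *v x) \<le> real CARD('m) * real CARD('n) * norm A * norm x"
proof -
  have "norm (A *v x) \<le> (\<Sum>i\<in>UNIV. \<bar>(A *v x) $ i\<bar>)" by (rule norm_le_l1_cart)
  also have "\<dots> \<le> (\<Sum>i::'m\<in>UNIV. real CARD('n) * norm A * norm x)"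
  proof (rule sum_mono)
    fix i
    have "\<bar>(A *v x) $ i\<bar> \<le> (\<Sum>j\<in>UNIV. \<bar>A $ i $ j * x $ j\<bar>)"
      unfolding matrix_vector_mult_def by (simp add: sum_abs)
    also have "\<dots> \<le> (\<Sum>j::'n\<in>UNIV. norm A * norm x)"
    proof (rule sum_mono)
      fix j
      have n1: "norm (A $ i) \<le> norm A" by (rule Finite_Cartesian_Product.norm_nth_le)
      have "\<bar>A $ i $ j\<bar> \<le> norm A" using component_le_norm_cart[of "A $ i" j] n1
        by linarith
      moreover have "\<bar>x $ j\<bar> \<le> norm x" by (rule component_le_norm_cart)
      ultimately show "\<bar>A $ i $ j * x $ j\<bar> \<le> norm A * norm x" by (simp add: abs_mult mult_mono)
    qed
    finally show "\<bar>(A *v x) $ i\<bar> \<le> real CARD('n) * norm A * norm x" by simp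
  qed
  also have "\<dots> = real CARD('m) * real CARD('n) * norm A * norm x" by simp
  finally show ?thesis .
qed

lemma intvec_norm_ge1:
  assumes "z \<in> intvecs" "z \<noteq> 0"
  shows "norm z \<ge> 1"
proof -
  obtain i where "z $ i \<noteq> 0" using assms(2) by (auto simp: vec_eq_iff)
  moreover have "z $ i \<in> \<int>" using assms(1) by (simp add: intvecs_def)
  ultimately have "1 \<le> \<bar>z $ i\<bar>" by (rule Ints_nonzero_abs_ge1[rotated])
  also have "\<dots> \<le> norm z" by (rule component_le_norm_cart)
  finally show ?thesis .
qed

lemma local_inj:
  fixes g0 :: "real^'d^'d::finite"
  assumes g0: "g0 \<in> unimod_mats"
  shows "\<exists>\<delta>>0. \<forall>g\<in>unimod_mats. \<forall>g'\<in>unimod_mats. dist g0 g < \<delta> \<longrightarrow> dist g0 g' < \<delta> \<longrightarrow> lat_of g = lat_of g' \<longrightarrow> g = g'"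
proof -
  obtain M where M: "M ** g0 = mat 1" using unimod_inv[OF g0] by blast
  define C where "C = real CARD('d) * real CARD('d)"
  have c1: "(1::real) \<le> real CARD('d)" using finite_UNIV_card_ge_0[where 'a='d] by simp
  have "(1::real) * 1 \<le> real CARD('d) * real CARD('d)" by (rule mult_mono) (use c1 in auto)
  then have C1: "C \<ge> 1" unfolding C_def by simp
  define K where "K = C * norm M + 1"
  have "C * norm M \<ge> 0" using C1 by simp
  then have K0: "K > 0" unfolding K_def by linarith
  have low: "norm x \<le> K * norm (g0 *v x)" for x
  proof -
    have "norm x = norm (M *v (g0 *v x))" by (simp add: matrix_vector_mul_assoc M)
    also have "\<dots> \<le> C * norm M * norm (g0 *v x)" using matvec_bound[of M "g0 *v x"] by (simp add: C_def)
    also have "\<dots> \<le> K * norm (g0 *v x)" unfolding K_def by (simp add: mult_right_mono distrib_right)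
    finally show ?thesis .
  qed
  define \<delta> where "\<delta> = 1 / (4 * C * K)"
  have d0: "\<delta> > 0" unfolding \<delta>_def using C1 K0 by simp
  have CdK: "C * \<delta> = 1 / (4 * K)" unfolding \<delta>_def using C1 by simp
  show ?thesis
  proof (intro exI[of _ \<delta>] conjI d0 ballI impI)
    fix g g' assume gG: "g \<in> unimod_mats" and g'G: "g' \<in> unimod_mats"
      and dg: "dist g0 g < \<delta>" and dg': "dist g0 g' < \<delta>" and eq: "lat_of g = lat_of g'"
    show "g = g'"
    proof (rule ccontr)
      assume ne: "g \<noteq> g'"
      have "\<exists>j. g *v axis j 1 \<noteq> g' *v axis j 1"
      proof (rule ccontr)
        assume "\<not> ?thesis"
        then have "\<forall>i j. g $ i $ j = g' $ i $ j" by (metis col_entry)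
        then show False using ne by (simp add: vec_eq_iff)
      qed
      then obtain j where j: "g *v axis j 1 \<noteq> g' *v axis j 1" by blast
      have "g' *v axis j 1 \<in> lat_of g" using eq axis_intvec unfolding lat_of_def by blast
      then obtain w where w: "w \<in> intvecs" "g' *v axis j 1 = g *v w" unfolding lat_of_def by blast
      define z where "z = w - axis j 1"
      have zI: "z \<in> intvecs" unfolding z_def by (rule intvec_diff[OF w(1) axis_intvec])
      have gz: "g *v z = (g' - g) *v axis j 1"
        by (simp add: z_def matrix_vector_mult_diff_distrib matrix_vector_mult_diff_rdistrib w(2))
      have "z \<noteq> 0" using gz j by (auto simp: matrix_vector_mult_diff_rdistrib)
      then have nz: "norm z \<ge> 1" using intvec_norm_ge1[OF zI] by blast
      have "norm (g' - g) \<le> dist g0 g + dist g0 g'"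
        by (metis dist_commute dist_norm dist_triangle)
      then have ngg: "norm (g' - g) < 2 * \<delta>" using dg dg' by linarith
      have up: "norm (g *v z) < 1 / (2 * K)"
      proof -
        have "norm (g *v z) \<le> C * norm (g' - g) * norm (axis j (1::real))"
          unfolding gz using matvec_bound[of "g' - g" "axis j 1"] by (simp add: C_def)
        also have "\<dots> = C * norm (g' - g)" by simp
        also have "\<dots> < C * (2 * \<delta>)" using ngg C1 by simp
        also have "\<dots> = 1 / (2 * K)" using CdK by simp
        finally show ?thesis .
      qed
      have lo: "norm (g *v z) \<ge> 3 / (4 * K)"
      proof -
        have a: "norm (g0 *v z) \<ge> norm z / K" using low[of z] K0 by (simp add: field_simps)
        have "norm ((g - g0) *v z) \<le> C * norm (g - g0) * norm z"
          using matvec_bound[of "g - g0" z] by (simp add: C_def)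
        also have "\<dots> \<le> C * \<delta> * norm z"
        proof -
          have "norm (g - g0) \<le> \<delta>" using dg by (simp add: dist_norm norm_minus_commute)
          then show ?thesis using C1 by (simp add: mult_right_mono mult_left_mono)
        qed
        also have "\<dots> = norm z / (4 * K)" using CdK by simp
        finally have b: "norm ((g - g0) *v z) \<le> norm z / (4 * K)" .
        have "g *v z = g0 *v z + (g - g0) *v z" by (simp add: matrix_vector_mult_diff_rdistrib)
        then have "norm (g *v z) \<ge> norm (g0 *v z) - norm ((g - g0) *v z)"
          by (metis norm_diff_ineq add_diff_cancel_right' norm_triangle_ineq2)
        then have "norm (g *v z) \<ge> norm z / K - norm z / (4 * K)" using a b by linarith
        moreover have "norm z / K - norm z / (4 * K) = 3 * norm z / (4 * K)" using K0 by (simp add: field_simps)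
        moreover have "3 * norm z / (4 * K) \<ge> 3 / (4 * K)" using nz K0 by (simp add: divide_right_mono)
        ultimately show ?thesis by linarith
      qed
      have "3 / (4 * K) < 1 / (2 * K)" using up lo by linarith
      then show False using K0 by (simp add: field_simps)
    qed
  qed
qed

lemma image_borel_local:
  fixes g0 :: "real^'d^'d::finite"
  assumes inj: "\<forall>g\<in>unimod_mats. \<forall>g'\<in>unimod_mats. dist g0 g < \<delta> \<longrightarrow> dist g0 g' < \<delta> \<longrightarrow> lat_of g = lat_of g' \<longrightarrow> g = g'"
    and B: "B \<in> sets borel"
  shows "lat_of ` (unimod_mats \<inter> ball g0 \<delta> \<inter> B) \<in> sets Xd_borel"
proof -
  define V where "V = unimod_mats \<inter> ball g0 \<delta>"
  have injV: "inj_on lat_of V" unfolding V_def inj_on_def using inj by (simp add: dist_commute)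
  have openV: "lat_of ` (V \<inter> S) \<in> sets Xd_borel" if "open S" for S
  proof -
    have "openin (top_of_set unimod_mats) (unimod_mats \<inter> (ball g0 \<delta> \<inter> S))"
      by (rule openin_open_Int) (use that in auto)
    then have "openin Xd_top (lat_of ` (V \<inter> S))" unfolding V_def
      by (metis Int_assoc pi_open)
    then show ?thesis by (rule open_in_Xd_borel)
  qed
  have "B \<in> sigma_sets UNIV {S. open S}" using B by (simp add: sets_borel)
  then have "lat_of ` (V \<inter> B) \<in> sets Xd_borel"
  proof induct
    case (Basic a) then show ?case using openV by simp
  next
    case Empty then show ?case by simp
  next
    case (Compl a)
    have eq: "V \<inter> (UNIV - a) = V - (V \<inter> a)" by blast
    have "lat_of ` (V - (V \<inter> a)) = lat_of ` V - lat_of ` (V \<inter> a)"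
      by (rule inj_on_image_set_diff[OF injV]) auto
    moreover have "lat_of ` V \<in> sets Xd_borel" using openV[of UNIV] by simp
    ultimately show ?case unfolding eq using sets.Diff[OF _ Compl(2)] by simp
  next
    case (Union a)
    have eq: "lat_of ` (V \<inter> \<Union> (range a)) = (\<Union>i. lat_of ` (V \<inter> a i))" by blast
    have "(\<Union>i. lat_of ` (V \<inter> a i)) \<in> sets Xd_borel"
      by (rule sets.countable_UN) (use Union(2) in blast)
    then show ?case unfolding eq .
  qed
  then show ?thesis unfolding V_def .
qed

lemma quot_borel:
  fixes A :: "(real^'d::finite) set set"
  assumes AX: "A \<subseteq> Xd" and P: "{g \<in> unimod_mats. lat_of g \<in> A} \<in> sets borel"
  shows "A \<in> sets Xd_borel"
proof -
  have "\<forall>g0\<in>(unimod_mats :: (real^'d^'d) set). \<exists>\<delta>>0. \<forall>g\<in>unimod_mats. \<forall>g'\<in>unimod_mats. dist g0 g < \<delta> \<longrightarrow> dist g0 g' < \<delta> \<longrightarrow> lat_of g = lat_of g' \<longrightarrow> g = g'"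
    using local_inj by blast
  then obtain \<delta> where dl: "\<And>g0. g0 \<in> (unimod_mats :: (real^'d^'d) set) \<Longrightarrow> \<delta> g0 > 0 \<and> (\<forall>g\<in>unimod_mats. \<forall>g'\<in>unimod_mats. dist g0 g < \<delta> g0 \<longrightarrow> dist g0 g' < \<delta> g0 \<longrightarrow> lat_of g = lat_of g' \<longrightarrow> g = g')"
    by (rule bchoice[THEN exE]) blast
  define F where "F = (\<lambda>g0. ball g0 (\<delta> g0)) ` (unimod_mats :: (real^'d^'d) set)"
  have "\<And>S. S \<in> F \<Longrightarrow> open S" unfolding F_def by auto
  then obtain F' where F': "F' \<subseteq> F" "countable F'" "\<Union>F' = \<Union>F" by (rule Lindelof)
  have "\<exists>G'. countable G' \<and> G' \<subseteq> unimod_mats \<and> F' = (\<lambda>g0. ball g0 (\<delta> g0)) ` G'"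
    using countable_subset_image[of F' "\<lambda>g0. ball g0 (\<delta> g0)" unimod_mats] F'(1,2) unfolding F_def by blast
  then obtain G' where G': "countable G'" "G' \<subseteq> unimod_mats" "F' = (\<lambda>g0. ball g0 (\<delta> g0)) ` G'"
    by blast
  define Pg where "Pg = {g \<in> unimod_mats. lat_of g \<in> A}"
  have "A = (\<Union>g0\<in>G'. lat_of ` (unimod_mats \<inter> ball g0 (\<delta> g0) \<inter> Pg))"
  proof
    show "(\<Union>g0\<in>G'. lat_of ` (unimod_mats \<inter> ball g0 (\<delta> g0) \<inter> Pg)) \<subseteq> A" unfolding Pg_def by blast
    show "A \<subseteq> (\<Union>g0\<in>G'. lat_of ` (unimod_mats \<inter> ball g0 (\<delta> g0) \<inter> Pg))"
    proof
      fix L assume L: "L \<in> A"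
      then obtain g where g: "g \<in> unimod_mats" "L = lat_of g" using AX unfolding Xd_def by blast
      have "g \<in> ball g (\<delta> g)" using dl[OF g(1)] by simp
      then have "g \<in> \<Union>F" unfolding F_def using g(1) by blast
      then have "g \<in> \<Union>F'" using F'(3) by simp
      then obtain g0 where "g0 \<in> G'" "g \<in> ball g0 (\<delta> g0)" using G'(3) by blast
      moreover have "g \<in> Pg" unfolding Pg_def using g L by simp
      ultimately show "L \<in> (\<Union>g0\<in>G'. lat_of ` (unimod_mats \<inter> ball g0 (\<delta> g0) \<inter> Pg))"
        using g by blast
    qed
  qed
  also have "\<dots> \<in> sets Xd_borel"
  proof (rule sets.countable_UN'[OF G'(1)])
    show "(\<lambda>g0. lat_of ` (unimod_mats \<inter> ball g0 (\<delta> g0) \<inter> Pg)) ` G' \<subseteq> sets Xd_borel"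
    proof
      fix X assume "X \<in> (\<lambda>g0. lat_of ` (unimod_mats \<inter> ball g0 (\<delta> g0) \<inter> Pg)) ` G'"
      then obtain g0 where g0: "g0 \<in> G'" "X = lat_of ` (unimod_mats \<inter> ball g0 (\<delta> g0) \<inter> Pg)" by blast
      have "g0 \<in> unimod_mats" using g0(1) G'(2) by blast
      have "\<forall>g\<in>unimod_mats. \<forall>g'\<in>unimod_mats. dist g0 g < \<delta> g0 \<longrightarrow> dist g0 g' < \<delta> g0 \<longrightarrow> lat_of g = lat_of g' \<longrightarrow> g = g'"
        using dl[OF \<open>g0 \<in> unimod_mats\<close>] by blast
      from image_borel_local[OF this, of Pg] show "X \<in> sets Xd_borel" unfolding g0(2)
        using P unfolding Pg_def by blast
    qed
  qed
  finally show ?thesis .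
qed

definition Tf :: "nat \<Rightarrow> nat \<Rightarrow> (nat \<Rightarrow> real^'d \<Rightarrow> real) \<Rightarrow> real^'d \<Rightarrow> nat \<Rightarrow> real" where
  "Tf k r N w c = (if c < k then ln (N c w) else if c < k + r - 1 then - ln (N c w) else 0)"

lemma amat_split: "g = amat k r blk t ** (amat k r blk (\<lambda>c. - t c) ** g)"
  by (simp add: matrix_mul_assoc amat_inv)

lemma flow_char:
  fixes g :: "real^'d^'d::finite" and N :: "nat \<Rightarrow> real^'d \<Rightarrow> real"
  assumes r: "r \<ge> 1" and blk: "\<forall>i. blk i < k + r" and pos: "blocksize blk (k+r-1) > 0"
    and norms: "\<forall>b < k + r. is_block_norm blk b (N b)"
    and E: "E \<subseteq> Seps k r blk N \<epsilon>"
  shows "lat_of g \<in> flowset k r blk (Itau k r \<tau>) E \<longleftrightarrow>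
    (\<exists>z\<in>intvecs. (\<forall>b<k+r-1. N b (g *v z) > 0) \<and> Tf k r N (g *v z) \<in> Itau k r \<tau> \<and>
        lat_of (amat k r blk (\<lambda>c. - Tf k r N (g *v z) c) ** g) \<in> E)"
proof
  assume "lat_of g \<in> flowset k r blk (Itau k r \<tau>) E"
  then obtain t L0 where t: "t \<in> Itau k r \<tau>" and L0: "L0 \<in> E" and gL: "lat_of g = lat_act (amat k r blk t) L0"
    unfolding flowset_def by blast
  define h where "h = amat k r blk (\<lambda>c. - t c) ** g"
  have "lat_of h = lat_act (amat k r blk (\<lambda>c. - t c)) (lat_of g)" by (simp add: h_def lat_act_lat_of)
  also have "\<dots> = L0" by (simp add: gL lat_act_lat_act amat_inv lat_act_one)
  finally have hL: "lat_of h = L0" .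
  obtain v where v: "v \<in> L0" "\<forall>b < k + r - 1. N b v = 1"
    using L0 E unfolding Seps_def Leps_def primitive_in_def by blast
  obtain z where z: "z \<in> intvecs" "v = h *v z" using v(1) hL unfolding lat_of_def by blast
  have gz: "g *v z = amat k r blk t *v v"
    by (simp add: z(2) h_def matrix_vector_mul_assoc matrix_mul_assoc amat_inv)
  have Nb: "N b (g *v z) = exp (aexp k r blk t b)" if "b < k + r - 1" for b
  proof -
    have "is_block_norm blk b (N b)" using norms that by simp
    then show ?thesis using v(2) that by (simp add: gz block_norm_amat)
  qed
  have Teq: "Tf k r N (g *v z) = t"
  proof
    fix c
    show "Tf k r N (g *v z) c = t c"
    proof (cases "c < k + r - 1")
      case True
      then show ?thesis using Nb[OF True] by (auto simp: Tf_def aexp_def)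
    next
      case False
      then show ?thesis using t r by (auto simp: Tf_def Itau_def)
    qed
  qed
  show "\<exists>z\<in>intvecs. (\<forall>b<k+r-1. N b (g *v z) > 0) \<and> Tf k r N (g *v z) \<in> Itau k r \<tau> \<and>
        lat_of (amat k r blk (\<lambda>c. - Tf k r N (g *v z) c) ** g) \<in> E"
  proof (intro bexI[OF _ z(1)] conjI allI impI)
    show "0 < N b (g *v z)" if "b < k + r - 1" for b using Nb[OF that] by simp
    show "Tf k r N (g *v z) \<in> Itau k r \<tau>" using t Teq by simp
    show "lat_of (amat k r blk (\<lambda>c. - Tf k r N (g *v z) c) ** g) \<in> E" using L0 hL Teq h_def by simp
  qed
next
  assume "\<exists>z\<in>intvecs. (\<forall>b<k+r-1. N b (g *v z) > 0) \<and> Tf k r N (g *v z) \<in> Itau k r \<tau> \<and>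
        lat_of (amat k r blk (\<lambda>c. - Tf k r N (g *v z) c) ** g) \<in> E"
  then obtain z where z: "Tf k r N (g *v z) \<in> Itau k r \<tau>"
      "lat_of (amat k r blk (\<lambda>c. - Tf k r N (g *v z) c) ** g) \<in> E" by blast
  define t where "t = Tf k r N (g *v z)"
  have "lat_of g = lat_act (amat k r blk t) (lat_of (amat k r blk (\<lambda>c. - t c) ** g))"
    by (simp add: lat_act_lat_of flip: amat_split)
  then show "lat_of g \<in> flowset k r blk (Itau k r \<tau>) E"
    unfolding flowset_def using z t_def by blast
qed

lemma borel_preimage_open_cont:
  fixes f :: "'a::topological_space \<Rightarrow> 'b::topological_space"
  assumes "open S" "continuous_on S f" "B \<in> sets borel"
  shows "{x \<in> S. f x \<in> B} \<in> sets borel"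
proof -
  have m: "f \<in> borel_measurable (restrict_space borel S)"
    by (rule borel_measurable_continuous_on_restrict[OF assms(2)])
  have "f -` B \<inter> space (restrict_space borel S) \<in> sets (restrict_space borel S)"
    by (rule measurable_sets[OF m assms(3)])
  moreover have "f -` B \<inter> space (restrict_space borel S) = {x \<in> S. f x \<in> B}"
    by (auto simp: space_restrict_space)
  moreover have "S \<inter> space borel \<in> sets borel" using assms(1) by simp
  ultimately show ?thesis by (simp add: sets_restrict_space_iff)
qed

lemma countable_intvecs: "countable (intvecs :: (real^'d::finite) set)"
proof -
  have "intvecs = range (\<lambda>f::'d \<Rightarrow> int. (\<chi> i. of_int (f i)) :: real^'d)"
  proof
    show "intvecs \<subseteq> range (\<lambda>f::'d \<Rightarrow> int. (\<chi> i. of_int (f i)) :: real^'d)"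
    proof
      fix z :: "real^'d" assume "z \<in> intvecs"
      then have "\<forall>i. \<exists>n::int. z $ i = of_int n" unfolding intvecs_def Ints_def by blast
      then obtain f where "\<forall>i. z $ i = of_int (f i)" by (rule choice[THEN exE]) blast
      then have "z = (\<chi> i. of_int (f i))" by (simp add: vec_eq_iff)
      then show "z \<in> range (\<lambda>f::'d \<Rightarrow> int. (\<chi> i. of_int (f i)) :: real^'d)" by blast
    qed
  qed (auto simp: intvecs_def)
  moreover have "countable (range (\<lambda>f::'d \<Rightarrow> int. (\<chi> i. of_int (f i)) :: real^'d))"
    by (rule countable_image[OF countableI_type])
  ultimately show ?thesis by simp
qed

lemma aexp_cont:
  assumes "\<And>c. continuous_on S (\<lambda>x. F x c)"
  shows "continuous_on S (\<lambda>x. aexp k r blk (F x) b)"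
proof (cases "b < k")
  case True then show ?thesis unfolding aexp_def using assms by simp
next
  case False
  show ?thesis
  proof (cases "b < k + r - 1")
    case True then show ?thesis unfolding aexp_def using assms \<open>\<not> b < k\<close> by (simp add: continuous_on_minus)
  next
    case False
    have "continuous_on S (\<lambda>x. ((\<Sum>c = k..<k + r - 1. real (blocksize blk c) * F x c) -
                     (\<Sum>c<k. real (blocksize blk c) * F x c)) / real (blocksize blk (k + r - 1)))"
      unfolding divide_inverse by (intro continuous_intros assms)
    then show ?thesis unfolding aexp_def using False \<open>\<not> b < k\<close> by simp
  qed
qed

lemma Tf_cont:
  assumes r: "r \<ge> 1" and norms: "\<forall>b < k + r. is_block_norm blk b (N b)"
  shows "continuous_on {g. \<forall>b<k+r-1. N b (g *v z) > 0} (\<lambda>g. Tf k r N (g *v z) c)"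
proof -
  let ?O = "{g. \<forall>b<k+r-1. N b (g *v z) > 0}"
  have cN: "continuous_on ?O (\<lambda>g. N c (g *v z))" if "c < k + r" for c
  proof -
    have "continuous_on UNIV (N c)" using block_norm_cont norms that by blast
    then show ?thesis by (rule continuous_on_compose2[OF _ cont_matvec[of ?O z]]) simp
  qed
  show ?thesis
  proof (cases "c < k + r - 1")
    case True
    then have "c < k + r" by simp
    have "continuous_on ?O (\<lambda>g. ln (N c (g *v z)))"
      by (rule continuous_on_ln[OF cN[OF \<open>c < k + r\<close>]]) (use True in auto)
    then show ?thesis unfolding Tf_def using True r
      by (cases "c < k") (simp_all add: continuous_on_minus)
  next
    case False
    then have "\<not> c < k" "\<not> c < k + r - 1" using r by auto
    then show ?thesis unfolding Tf_def by simp
  qed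
qed

lemma open_Oz:
  assumes norms: "\<forall>b < k + r. is_block_norm blk b (N b)"
  shows "open {g::real^'d^'d::finite. \<forall>b<k+r-1. N b (g *v z) > 0}"
proof -
  have eq: "{g::real^'d^'d. \<forall>b<k+r-1. N b (g *v z) > 0} = (\<Inter>b\<in>{..<k+r-1}. {g. N b (g *v z) > 0})" by blast
  have "open {g::real^'d^'d. N b (g *v z) > 0}" if "b < k + r - 1" for b
  proof -
    have "is_block_norm blk b (N b)" using norms that by simp
    then have "continuous_on UNIV (N b)" by (rule block_norm_cont)
    then have "continuous_on UNIV (\<lambda>g::real^'d^'d. N b (g *v z))"
      by (rule continuous_on_compose2[OF _ cont_matvec[of UNIV z]]) simp
    then show ?thesis by (intro open_Collect_less continuous_on_const) simp_all
  qed
  then show ?thesis unfolding eq by (intro open_INT) auto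
qed

lemma Phi_cont:
  assumes r: "r \<ge> 1" and norms: "\<forall>b < k + r. is_block_norm blk b (N b)"
  shows "continuous_on {g. \<forall>b<k+r-1. N b (g *v z) > 0} (\<lambda>g. amat k r blk (\<lambda>c. - Tf k r N (g *v z) c) ** g)"
proof -
  let ?O = "{g. \<forall>b<k+r-1. N b (g *v z) > 0}"
  have "continuous_on ?O (\<lambda>g. aexp k r blk (\<lambda>c. - Tf k r N (g *v z) c) b)" for b
    by (rule aexp_cont) (intro continuous_on_minus Tf_cont[OF r norms])
  then have "continuous_on ?O (\<lambda>g. (\<chi> i j. exp (aexp k r blk (\<lambda>c. - Tf k r N (g *v z) c) (blk i)) * g $ i $ j))"
    by (intro continuous_on_vec_lambda continuous_intros) auto
  then show ?thesis by (simp add: amat_mult_mat)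
qed

lemma flowset_borel:
  fixes N :: "nat \<Rightarrow> real^'d::finite \<Rightarrow> real"
  assumes r: "r \<ge> 1" and blk: "\<forall>i. blk i < k + r" and pos: "blocksize blk (k+r-1) > 0"
    and norms: "\<forall>b < k + r. is_block_norm blk b (N b)"
    and E: "E \<subseteq> Seps k r blk N \<epsilon>" and Em: "E \<in> sets Xd_borel"
  shows "{g \<in> unimod_mats. lat_of g \<in> flowset k r blk (Itau k r \<tau>) E} \<in> sets borel"
proof -
  let ?D = "k + r - 1"
  define Oz where "Oz z = {g::real^'d^'d. \<forall>b<?D. N b (g *v z) > 0}" for z
  define Phi where "Phi z g = amat k r blk (\<lambda>c. - Tf k r N (g *v z) c) ** g" for z and g :: "real^'d^'d"
  define PE where "PE = {h \<in> unimod_mats. lat_of h \<in> E}"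
  have PE: "PE \<in> sets borel" unfolding PE_def by (rule pre_borel[OF Em])
  define C where "C z = unimod_mats \<inter> Oz z \<inter> {g \<in> Oz z. Phi z g \<in> PE} \<inter>
      (\<Inter>c\<in>{..<?D}. {g \<in> Oz z. Tf k r N (g *v z) c \<in> {0..\<tau>}})" for z
  have Cb: "C z \<in> sets borel" for z
  proof -
    have oO: "open (Oz z)" unfolding Oz_def by (rule open_Oz[OF norms])
    have "{g \<in> Oz z. Phi z g \<in> PE} \<in> sets borel"
      by (rule borel_preimage_open_cont[OF oO _ PE]) (unfold Oz_def Phi_def, rule Phi_cont[OF r norms])
    moreover have T1: "{g \<in> Oz z. Tf k r N (g *v z) c \<in> {0..\<tau>}} \<in> sets borel" for c
      by (rule borel_preimage_open_cont[OF oO]) (unfold Oz_def, rule Tf_cont[OF r norms], simp)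
    have "UNIV \<in> sets (borel :: (real^'d^'d) measure)" using sets.top[of borel] by simp
    then have "(\<Inter>c\<in>{..<?D}. {g \<in> Oz z. Tf k r N (g *v z) c \<in> {0..\<tau>}}) \<in> sets borel"
      by (rule sets.countable_INT'') (use T1 in auto)
    moreover have "Oz z \<in> sets borel" using oO by simp
    ultimately show ?thesis unfolding C_def using borel_unimod
      by (intro sets.Int) auto
  qed
  have "{g \<in> unimod_mats. lat_of g \<in> flowset k r blk (Itau k r \<tau>) E} = (\<Union>z\<in>intvecs. C z)"
  proof (intro set_eqI iffI)
    fix g assume g: "g \<in> {g \<in> unimod_mats. lat_of g \<in> flowset k r blk (Itau k r \<tau>) E}"
    then obtain z where z: "z \<in> intvecs" "\<forall>b<?D. N b (g *v z) > 0" "Tf k r N (g *v z) \<in> Itau k r \<tau>"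
        "lat_of (Phi z g) \<in> E"
      using flow_char[OF r blk pos norms E] unfolding Phi_def by blast
    have "Phi z g \<in> unimod_mats" unfolding Phi_def using g det_amat[OF r blk pos] unimod_mult by blast
    then have "g \<in> C z" using g z unfolding C_def Oz_def PE_def by (auto simp: Itau_def)
    then show "g \<in> (\<Union>z\<in>intvecs. C z)" using z(1) by blast
  next
    fix g assume "g \<in> (\<Union>z\<in>intvecs. C z)"
    then obtain z where z: "z \<in> intvecs" "g \<in> C z" by blast
    have g: "g \<in> unimod_mats" "\<forall>b<?D. N b (g *v z) > 0" "lat_of (Phi z g) \<in> E"
      using z(2) unfolding C_def Oz_def PE_def by auto
    have "Tf k r N (g *v z) \<in> Itau k r \<tau>"
      using z(2) r unfolding C_def Itau_def by (auto simp: Tf_def)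
    then have "lat_of g \<in> flowset k r blk (Itau k r \<tau>) E"
      using flow_char[OF r blk pos norms E] z(1) g unfolding Phi_def by blast
    then show "g \<in> {g \<in> unimod_mats. lat_of g \<in> flowset k r blk (Itau k r \<tau>) E}" using g by blast
  qed
  also have "\<dots> \<in> sets borel"
    by (rule sets.countable_UN'[OF countable_intvecs]) (use Cb in blast)
  finally show ?thesis .
qed

lemma lower_bound_step:
  fixes F :: "real \<Rightarrow> real" and D :: nat
  assumes F0: "\<And>t. t > 0 \<Longrightarrow> F t \<ge> 0"
    and mono: "\<And>a b. 0 < a \<Longrightarrow> a \<le> b \<Longrightarrow> F a \<le> F b"
    and sub: "\<And>n t. n \<ge> 1 \<Longrightarrow> t > 0 \<Longrightarrow> F (real n * t) \<le> real n ^ D * F t"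
    and t: "0 < t" "t < t0"
  shows "F t0 / (t0 + t) ^ D \<le> F t / t ^ D"
proof -
  define n where "n = nat \<lceil>t0 / t\<rceil>"
  have t00: "t0 > 0" using t by simp
  have q: "t0 / t > 1" using t by simp
  have n1: "n \<ge> 1" unfolding n_def using q by linarith
  have nge: "real n \<ge> t0 / t" unfolding n_def using q by linarith
  have nlt: "real n < t0 / t + 1" unfolding n_def using q by linarith
  have npos: "real n > 0" using n1 by simp
  have le: "t0 / real n \<le> t" using nge t npos by (simp add: field_simps)
  have pos: "t0 / real n > 0" using t00 npos by simp
  have "F t0 = F (real n * (t0 / real n))" using npos by simp
  also have "\<dots> \<le> real n ^ D * F (t0 / real n)" by (rule sub[OF n1 pos])
  also have "\<dots> \<le> real n ^ D * F t" by (intro mult_left_mono mono[OF pos le]) simp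
  finally have A: "F t0 \<le> real n ^ D * F t" .
  have B: "real n * t \<le> t0 + t" using nlt t by (simp add: field_simps)
  have "F t0 / (t0 + t) ^ D \<le> F t0 / (real n * t) ^ D"
  proof (rule divide_left_mono)
    show "(real n * t) ^ D \<le> (t0 + t) ^ D" using B npos t by (intro power_mono) auto
  qed (use F0[OF t00] npos t in auto)
  also have "\<dots> = F t0 / (real n ^ D * t ^ D)" by (simp add: power_mult_distrib)
  also have "\<dots> \<le> real n ^ D * F t / (real n ^ D * t ^ D)"
    by (rule divide_right_mono[OF A]) (use npos t in simp)
  also have "\<dots> = F t / t ^ D" using npos by simp
  finally show ?thesis .
qed

lemma limit_abstract:
  fixes F :: "real \<Rightarrow> real" and D :: nat
  assumes F0: "\<And>t. t > 0 \<Longrightarrow> F t \<ge> 0"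
    and mono: "\<And>a b. 0 < a \<Longrightarrow> a \<le> b \<Longrightarrow> F a \<le> F b"
    and sub: "\<And>n t. n \<ge> 1 \<Longrightarrow> t > 0 \<Longrightarrow> F (real n * t) \<le> real n ^ D * F t"
  shows "((\<lambda>t. ennreal (F t) / ennreal (t ^ D)) \<longlongrightarrow> (SUP t\<in>{0<..}. ennreal (F t) / ennreal (t ^ D))) (at_right 0)"
proof (rule order_tendstoI)
  let ?g = "\<lambda>t. ennreal (F t) / ennreal (t ^ D)"
  let ?S = "SUP t\<in>{0<..}. ?g t"
  have ev0: "eventually (\<lambda>t::real. t > 0) (at_right 0)" by (simp add: eventually_at_right_less)
  fix a assume "a > ?S"
  show "eventually (\<lambda>t. ?g t < a) (at_right 0)"
  proof (rule eventually_mono[OF ev0])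
    fix t :: real assume "t > 0"
    then have "?g t \<le> ?S" by (intro SUP_upper) simp
    then show "?g t < a" using \<open>a > ?S\<close> by simp
  qed
next
  let ?g = "\<lambda>t. ennreal (F t) / ennreal (t ^ D)"
  let ?S = "SUP t\<in>{0<..}. ?g t"
  have ev0: "eventually (\<lambda>t::real. t > 0) (at_right 0)" by (simp add: eventually_at_right_less)
  fix a assume "a < ?S"
  then obtain t0 where t0: "t0 > 0" "a < ?g t0" by (auto simp: less_SUP_iff)
  have gt0: "?g t0 = ennreal (F t0 / t0 ^ D)" using t0(1) F0[OF t0(1)] by (simp add: divide_ennreal)
  have "a < top" using t0(2) gt0 by (metis ennreal_less_top order.strict_trans)
  then obtain a' where a': "a = ennreal a'" "a' \<ge> 0" by (cases a rule: ennreal_cases) auto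
  have "a' < F t0 / t0 ^ D" using t0(2) gt0 a' by (simp add: ennreal_less_iff)
  moreover have "((\<lambda>t. F t0 / (t0 + t) ^ D) \<longlongrightarrow> F t0 / (t0 + 0) ^ D) (at_right 0)"
    using t0(1) by (intro tendsto_intros) auto
  ultimately have ev1: "eventually (\<lambda>t. a' < F t0 / (t0 + t) ^ D) (at_right 0)"
    by (simp add: order_tendstoD(1))
  have ev2: "eventually (\<lambda>t::real. t < t0) (at_right 0)" using t0(1) unfolding eventually_at_right_field by blast
  show "eventually (\<lambda>t. a < ?g t) (at_right 0)"
  proof (rule eventually_mono[OF eventually_conj[OF ev0 eventually_conj[OF ev1 ev2]]])
    fix t :: real assume h: "0 < t \<and> a' < F t0 / (t0 + t) ^ D \<and> t < t0"
    then have "a' < F t / t ^ D" using lower_bound_step[OF F0 mono sub, of t t0] by fastforce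
    moreover have "?g t = ennreal (F t / t ^ D)" using h F0[of t] by (simp add: divide_ennreal)
    ultimately show "a < ?g t" using a' by (simp add: ennreal_less_iff)
  qed
qed

lemma cover_step:
  fixes t :: "nat \<Rightarrow> real"
  assumes n1: "n \<ge> 1" and tau: "\<tau> > 0" and t: "t \<in> Itau k r (real n * \<tau>)"
  defines "j \<equiv> (\<lambda>i. if i < k + r - 1 then min (nat \<lfloor>t i / \<tau>\<rfloor>) (n - 1) else 0)"
  shows "(\<lambda>i. t i - real (j i) * \<tau>) \<in> Itau k r \<tau>"
proof -
  have "0 \<le> t i - real (j i) * \<tau> \<and> t i - real (j i) * \<tau> \<le> \<tau>" if i: "i < k + r - 1" for i
  proof -
    have ti: "0 \<le> t i" "t i \<le> real n * \<tau>" using t i by (auto simp: Itau_def)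
    define q where "q = \<lfloor>t i / \<tau>\<rfloor>"
    have q0: "q \<ge> 0" unfolding q_def using ti tau by simp
    have "real_of_int q \<le> t i / \<tau>" unfolding q_def by (rule of_int_floor_le)
    then have "real_of_int q * \<tau> \<le> t i / \<tau> * \<tau>" using tau by (intro mult_right_mono) auto
    then have qle: "real_of_int q * \<tau> \<le> t i" using tau by simp
    have "t i / \<tau> < real_of_int q + 1" unfolding q_def by (rule real_of_int_floor_add_one_gt)
    then have "t i / \<tau> * \<tau> < (real_of_int q + 1) * \<tau>" using tau by (intro mult_strict_right_mono) auto
    then have qgt: "t i < (real_of_int q + 1) * \<tau>" using tau by simp
    show ?thesis
    proof (cases "nat q \<le> n - 1")
      case True
      then have "j i = nat q" using i by (simp add: j_def q_def)
      then have "real (j i) = real_of_int q" using q0 by simp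
      then show ?thesis using qle qgt by (simp add: algebra_simps)
    next
      case False
      then have ji: "j i = n - 1" using i by (simp add: j_def q_def)
      have "real n \<le> real_of_int q" using False q0 n1 by linarith
      then have "real n * \<tau> \<le> t i" using qle tau by (smt (verit) mult_right_mono)
      then have "t i = real n * \<tau>" using ti by simp
      moreover have "real (j i) = real n - 1" using ji n1 by simp
      ultimately have "t i - real (j i) * \<tau> = real n * \<tau> - (real n - 1) * \<tau>" by simp
      also have "\<dots> = \<tau>" by (simp add: algebra_simps)
      finally have "t i - real (j i) * \<tau> = \<tau>" .
      then show ?thesis using tau by simp
    qed
  qed
  moreover have "t i - real (j i) * \<tau> = 0" if "\<not> i < k + r - 1" for i
    using t that by (simp add: Itau_def j_def)
  ultimately show ?thesis unfolding Itau_def by auto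
qed

lemma sub_step:
  fixes k r :: nat and blk :: "'d::finite \<Rightarrow> nat" and N :: "nat \<Rightarrow> real^'d \<Rightarrow> real"
    and \<epsilon> :: real and m :: "(real^'d) set measure" and E :: "(real^'d) set set"
  assumes r: "r \<ge> 1" and blk: "\<forall>i. blk i < k + r" and pos: "blocksize blk (k+r-1) > 0"
    and haar: "is_Haar_Xd m" and E: "E \<subseteq> Seps k r blk N \<epsilon>"
    and Am: "\<And>\<tau>. flowset k r blk (Itau k r \<tau>) E \<in> sets m"
    and n1: "n \<ge> 1" and tau: "\<tau> > 0"
  shows "measure m (flowset k r blk (Itau k r (real n * \<tau>)) E) \<le> real n ^ (k+r-1) * measure m (flowset k r blk (Itau k r \<tau>) E)"
proof -
  have ps: "prob_space m" and spm: "space m = Xd" and sm: "sets m = sets Xd_borel"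
    and inv: "\<And>g A. det g = 1 \<Longrightarrow> A \<in> sets m \<Longrightarrow> emeasure m {L \<in> Xd. lat_act g L \<in> A} = emeasure m A"
    using haar unfolding is_Haar_Xd_def by auto
  interpret prob_space m by (rule ps)
  define D where "D = k + r - 1"
  define A where "A \<tau>' = flowset k r blk (Itau k r \<tau>') E" for \<tau>'
  define J0 where "J0 = PiE {..<D} (\<lambda>_. {..<n})"
  define ext where "ext f = (\<lambda>i. if i < D then f i else (0::nat))" for f :: "nat \<Rightarrow> nat"
  define J where "J = ext ` J0"
  have finJ0: "finite J0" unfolding J0_def by (intro finite_PiE) auto
  have finJ: "finite J" unfolding J_def using finJ0 by simp
  have "card J \<le> card J0" unfolding J_def by (rule card_image_le[OF finJ0])
  also have "card J0 = n ^ D" unfolding J0_def by (simp add: card_PiE)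
  finally have cardJ: "card J \<le> n ^ D" .
  define g where "g j = amat k r blk (\<lambda>i. - (real (j i) * \<tau>))" for j :: "nat \<Rightarrow> nat"
  have detg: "det (g j) = 1" for j unfolding g_def by (rule det_amat[OF r blk pos])
  define S where "S j = {L \<in> Xd. lat_act (g j) L \<in> A \<tau>}" for j
  have Sm: "S j \<in> sets m" for j
  proof -
    have "lat_act (g j) -` A \<tau> \<inter> space Xd_borel \<in> sets Xd_borel"
      by (rule measurable_sets[OF lat_act_measurable[OF detg]]) (use Am sm in \<open>simp add: A_def\<close>)
    moreover have "lat_act (g j) -` A \<tau> \<inter> space Xd_borel = S j" by (auto simp: S_def space_Xd_borel)
    ultimately show ?thesis using sm by simp
  qed
  have Smeas: "measure m (S j) = measure m (A \<tau>)" for j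
    unfolding measure_def S_def using inv[OF detg Am] by (simp add: A_def)
  have EX: "E \<subseteq> Xd" using E unfolding Seps_def by blast
  have cover: "A (real n * \<tau>) \<subseteq> (\<Union>j\<in>J. S j)"
  proof
    fix L assume "L \<in> A (real n * \<tau>)"
    then obtain t L0 where t: "t \<in> Itau k r (real n * \<tau>)" and L0: "L0 \<in> E" and L: "L = lat_act (amat k r blk t) L0"
      unfolding A_def flowset_def by blast
    define j where "j = (\<lambda>i. if i < k + r - 1 then min (nat \<lfloor>t i / \<tau>\<rfloor>) (n - 1) else 0)"
    have s: "(\<lambda>i. t i - real (j i) * \<tau>) \<in> Itau k r \<tau>" unfolding j_def by (rule cover_step[OF n1 tau t])
    define f where "f = restrict (\<lambda>i. min (nat \<lfloor>t i / \<tau>\<rfloor>) (n - 1)) {..<D}"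
    have "f \<in> J0" unfolding f_def J0_def using n1 by (auto simp: PiE_iff)
    moreover have "ext f = j" unfolding ext_def f_def j_def D_def by auto
    ultimately have jJ: "j \<in> J" unfolding J_def by blast
    have "lat_act (g j) L = lat_act (g j ** amat k r blk t) L0" by (simp add: L lat_act_lat_act)
    also have "g j ** amat k r blk t = amat k r blk (\<lambda>i. t i - real (j i) * \<tau>)"
      unfolding g_def amat_mult by (simp add: algebra_simps)
    finally have "lat_act (g j) L \<in> A \<tau>" unfolding A_def flowset_def using s L0 by blast
    moreover have "L \<in> Xd" unfolding L using L0 EX Xd_act det_amat[OF r blk pos] by blast
    ultimately show "L \<in> (\<Union>j\<in>J. S j)" using jJ unfolding S_def by blast
  qed
  have "measure m (A (real n * \<tau>)) \<le> measure m (\<Union>j\<in>J. S j)"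
    by (rule finite_measure_mono[OF cover]) (use finJ Sm in blast)
  also have "\<dots> \<le> (\<Sum>j\<in>J. measure m (S j))"
    by (rule finite_measure_subadditive_finite[OF finJ]) (use Sm in blast)
  also have "\<dots> = real (card J) * measure m (A \<tau>)" by (simp add: Smeas)
  also have "\<dots> \<le> real n ^ D * measure m (A \<tau>)"
  proof (rule mult_right_mono)
    show "real (card J) \<le> real n ^ D" using cardJ by (metis of_nat_le_iff of_nat_power)
  qed simp
  finally show ?thesis unfolding A_def D_def .
qed

theorem lemma5p3:
  fixes k r :: nat and blk :: "'d::finite \<Rightarrow> nat" and N :: "nat \<Rightarrow> real^'d \<Rightarrow> real"
    and \<epsilon> :: real and m :: "(real^'d) set measure" and E :: "(real^'d) set set"
  assumes "k \<ge> 1" and "r \<ge> 1"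
    and "\<forall>i. blk i < k + r"
    and "\<forall>b < k + r. \<exists>i. blk i = b"
    and "\<forall>b < k + r. is_block_norm blk b (N b)"
    and "is_Haar_Xd m"
    and "E \<in> sets m" and "E \<subseteq> Seps k r blk N \<epsilon>"
  shows "((\<lambda>\<tau>. emeasure (completion m) (flowset k r blk (Itau k r \<tau>) E) / ennreal (\<tau> ^ (k + r - 1)))
            \<longlongrightarrow> muS m k r blk E) (at_right 0)"
proof -
  note r = assms(2) and blk = assms(3) and surj = assms(4) and norms = assms(5) and haar = assms(6)
    and Em = assms(7) and E = assms(8)
  have ps: "prob_space m" and spm: "space m = Xd" and sm: "sets m = sets Xd_borel"
    using haar unfolding is_Haar_Xd_def by auto
  interpret prob_space m by (rule ps)
  have pos: "blocksize blk (k+r-1) > 0"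
  proof -
    have "k + r - 1 < k + r" using r by simp
    then obtain i where "blk i = k + r - 1" using surj by blast
    then have "{i. blk i = k + r - 1} \<noteq> {}" by blast
    then show ?thesis unfolding blocksize_def by (simp add: card_gt_0_iff)
  qed
  have EX: "E \<subseteq> Xd" using E unfolding Seps_def by blast
  have Em': "E \<in> sets Xd_borel" using Em sm by simp
  define A where "A \<tau> = flowset k r blk (Itau k r \<tau>) E" for \<tau>
  have Asub: "A \<tau> \<subseteq> Xd" for \<tau>
  proof
    fix L assume "L \<in> A \<tau>"
    then obtain t L0 where "L0 \<in> E" "L = lat_act (amat k r blk t) L0" unfolding A_def flowset_def by blast
    then show "L \<in> Xd" using EX Xd_act det_amat[OF r blk pos] by blast
  qed
  have Am: "A \<tau> \<in> sets m" for \<tau>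
  proof -
    have "A \<tau> \<in> sets Xd_borel"
      by (rule quot_borel[OF Asub]) (unfold A_def, rule flowset_borel[OF r blk pos norms E Em'])
    then show ?thesis using sm by simp
  qed
  define F where "F \<tau> = measure m (A \<tau>)" for \<tau>
  have emeq: "emeasure (completion m) (A \<tau>) = ennreal (F \<tau>)" for \<tau>
  proof -
    have "A \<tau> \<in> sets (completion m)" using Am by (rule sets_completionI_sets)
    then have "emeasure (completion m) (A \<tau>) = emeasure m (A \<tau>)" using Am by simp
    also have "\<dots> = ennreal (F \<tau>)" unfolding F_def by (rule emeasure_eq_measure)
    finally show ?thesis .
  qed
  have F0: "\<And>t. t > 0 \<Longrightarrow> F t \<ge> 0" unfolding F_def by simp
  have mono: "\<And>a b. 0 < a \<Longrightarrow> a \<le> b \<Longrightarrow> F a \<le> F b"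
  proof -
    fix a b :: real assume "0 < a" "a \<le> b"
    then have "Itau k r a \<subseteq> Itau k r b" unfolding Itau_def by auto
    then have "A a \<subseteq> A b" unfolding A_def flowset_def by blast
    then show "F a \<le> F b" unfolding F_def by (rule finite_measure_mono) (rule Am)
  qed
  have sub: "\<And>n t. n \<ge> 1 \<Longrightarrow> t > 0 \<Longrightarrow> F (real n * t) \<le> real n ^ (k+r-1) * F t"
    unfolding F_def A_def by (rule sub_step[OF r blk pos haar E]) (use Am in \<open>simp_all add: A_def\<close>)
  have lim: "((\<lambda>t. ennreal (F t) / ennreal (t ^ (k+r-1))) \<longlongrightarrow> (SUP t\<in>{0<..}. ennreal (F t) / ennreal (t ^ (k+r-1)))) (at_right 0)"
    by (rule limit_abstract[OF F0 mono sub])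
  have fe: "(\<lambda>\<tau>. emeasure (completion m) (flowset k r blk (Itau k r \<tau>) E) / ennreal (\<tau> ^ (k + r - 1)))
      = (\<lambda>t. ennreal (F t) / ennreal (t ^ (k+r-1)))"
    using emeq unfolding A_def by simp
  have "muS m k r blk E = (SUP t\<in>{0<..}. ennreal (F t) / ennreal (t ^ (k+r-1)))"
    unfolding muS_def using emeq unfolding A_def by simp
  then show ?thesis using lim fe by simp
qed

end
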